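(* Let $X$ be a $G$-space such that the orbit map $\rho_X\colon X\to X/G$ admits a strict section, i.e. a continuous $s\colon X/G\to X$ with $\rho_X\circ s=\mathrm{id}_{X/G}$. Then (1) $\mathrm{cat}^{G,\infty}(X)=\mathrm{cat}(X/G)$, and (2) $\mathrm{TC}^{G,\infty}(X)=\mathrm{TC}(X/G)$.
   Context: All spaces are well-pointed CW complexes, $G$ a topological group acting cellularly; $x_0\in X$ is the base point. $\mathrm{cat}$ and $\mathrm{TC}$ denote the reduced Lusternik–Schnirelmann category and reduced topological complexity. $PX$ is the path space; $\mathcal{P}_k(X)=\{(\gamma_1,\dots,\gamma_k)\in(PX)^k\mid G\gamma_i(1)=G\gamma_{i+1}(0),\ 1\le i\le k-1\}$, $\pi_k(\gamma_1,\dots,\gamma_k)=(\gamma_1(0),\gamma_k(1))\in X\times X$. $\mathrm{secat}$ is reduced sectional category (least $n$ such that the base is covered by $n+1$ open sets each admitting a homotopy section). $\mathrm{TC}^{G,k}(X)=\mathrm{secat}(\pi_k)$, $\mathrm{TC}^{G,\infty}(X)=\min_k\mathrm{TC}^{G,k}(X)$. $P^k_*(X)=\{(\gamma_1,\dots,\gamma_k)\in\mathcal{P}_k(X)\mid\gamma_1(0)=x_0\}$, $q_k(\gamma_1,\dots,\gamma_k)=\gamma_k(1)$, $\mathrm{cat}^{G,k}(X)=\mathrm{secat}(q_k)$, $\mathrm{cat}^{G,\infty}(X)=\min_k\mathrm{cat}^{G,k}(X)$. *)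

theory Defs
  imports "HOL-Analysis.Analysis" "HOL-Algebra.Group" "HOL-Library.Extended_Nat"
begin

definition topological_group :: "('g, 'm) monoid_scheme \<Rightarrow> 'g topology \<Rightarrow> bool" where
  "topological_group G TG \<longleftrightarrow> group G \<and> topspace TG = carrier G
     \<and> continuous_map (prod_topology TG TG) TG (\<lambda>(g, h). g \<otimes>\<^bsub>G\<^esub> h)
     \<and> continuous_map TG TG (\<lambda>g. inv\<^bsub>G\<^esub> g)"

definition G_space :: "('g, 'm) monoid_scheme \<Rightarrow> 'g topology \<Rightarrow> ('g \<Rightarrow> 'a \<Rightarrow> 'a) \<Rightarrow> 'a topology \<Rightarrow> bool" where
  "G_space G TG act X \<longleftrightarrow> topological_group G TG
     \<and> continuous_map (prod_topology TG X) X (\<lambda>(g, x). act g x)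
     \<and> (\<forall>x\<in>topspace X. act \<one>\<^bsub>G\<^esub> x = x)
     \<and> (\<forall>g\<in>carrier G. \<forall>h\<in>carrier G. \<forall>x\<in>topspace X. act (g \<otimes>\<^bsub>G\<^esub> h) x = act g (act h x))"

definition orbit :: "('g, 'm) monoid_scheme \<Rightarrow> ('g \<Rightarrow> 'a \<Rightarrow> 'a) \<Rightarrow> 'a \<Rightarrow> 'a set" where
  "orbit G act x = {act g x | g. g \<in> carrier G}"

definition quotient_topology :: "'a topology \<Rightarrow> ('a \<Rightarrow> 'b) \<Rightarrow> 'b topology" where
  "quotient_topology X f = topology (\<lambda>U. U \<subseteq> f ` topspace X \<and> openin X {x \<in> topspace X. f x \<in> U})"

definition orbit_space :: "('g, 'm) monoid_scheme \<Rightarrow> ('g \<Rightarrow> 'a \<Rightarrow> 'a) \<Rightarrow> 'a topology \<Rightarrow> 'a set topology" where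
  "orbit_space G act X = quotient_topology X (orbit G act)"

text \<open>Paths are continuous maps on \<open>[0,1]\<close>, made extensional (value \<open>undefined\<close> outside \<open>[0,1]\<close>).\<close>
definition paths :: "'a topology \<Rightarrow> (real \<Rightarrow> 'a) set" where
  "paths X = {g. pathin X g \<and> g \<in> extensional {0..1}}"

definition path_space :: "'a topology \<Rightarrow> (real \<Rightarrow> 'a) topology" where
  "path_space X = topology_generated_by
     {{g \<in> paths X. g ` K \<subseteq> U} | K U. compact K \<and> K \<subseteq> {0..1} \<and> openin X U}"

definition secat :: "'e topology \<Rightarrow> 'b topology \<Rightarrow> ('e \<Rightarrow> 'b) \<Rightarrow> enat" where
  "secat E B p = Inf {enat n | n. \<exists>U :: nat \<Rightarrow> 'b set.
      (\<forall>i\<le>n. openin B (U i)) \<and> (\<Union>i\<le>n. U i) = topspace B \<and>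
      (\<forall>i\<le>n. \<exists>\<sigma>. continuous_map (subtopology B (U i)) E \<sigma> \<and>
                 homotopic_with (\<lambda>_. True) (subtopology B (U i)) B (p \<circ> \<sigma>) id)}"

definition based_paths_space :: "'a topology \<Rightarrow> 'a \<Rightarrow> (real \<Rightarrow> 'a) topology" where
  "based_paths_space Y y0 = subtopology (path_space Y) {g \<in> paths Y. g 0 = y0}"

definition LS_cat :: "'a topology \<Rightarrow> 'a \<Rightarrow> enat" where
  "LS_cat Y y0 = secat (based_paths_space Y y0) Y (\<lambda>g. g 1)"

definition TC :: "'a topology \<Rightarrow> enat" where
  "TC Y = secat (path_space Y) (prod_topology Y Y) (\<lambda>g. (g 0, g 1))"

text \<open>\<open>k\<close>-tuples of paths, indexed by \<open>{..<k}\<close> (paper indices \<open>1..k\<close> become \<open>0..k-1\<close>),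
  with consecutive endpoints in the same orbit.\<close>
definition multipath_space :: "('g, 'm) monoid_scheme \<Rightarrow> ('g \<Rightarrow> 'a \<Rightarrow> 'a) \<Rightarrow> 'a topology \<Rightarrow> nat
    \<Rightarrow> (nat \<Rightarrow> real \<Rightarrow> 'a) topology" where
  "multipath_space G act X k = subtopology (product_topology (\<lambda>_. path_space X) {..<k})
     {\<gamma>. \<forall>i. Suc i < k \<longrightarrow> orbit G act (\<gamma> i 1) = orbit G act (\<gamma> (Suc i) 0)}"

definition TC_G_k :: "('g, 'm) monoid_scheme \<Rightarrow> ('g \<Rightarrow> 'a \<Rightarrow> 'a) \<Rightarrow> 'a topology \<Rightarrow> nat \<Rightarrow> enat" where
  "TC_G_k G act X k = secat (multipath_space G act X k) (prod_topology X X)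
      (\<lambda>\<gamma>. (\<gamma> 0 0, \<gamma> (k - 1) 1))"

definition TC_G_inf :: "('g, 'm) monoid_scheme \<Rightarrow> ('g \<Rightarrow> 'a \<Rightarrow> 'a) \<Rightarrow> 'a topology \<Rightarrow> enat" where
  "TC_G_inf G act X = (INF k\<in>{1..}. TC_G_k G act X k)"

definition cat_G_k :: "('g, 'm) monoid_scheme \<Rightarrow> ('g \<Rightarrow> 'a \<Rightarrow> 'a) \<Rightarrow> 'a topology \<Rightarrow> 'a \<Rightarrow> nat \<Rightarrow> enat" where
  "cat_G_k G act X x0 k = secat
      (subtopology (multipath_space G act X k) {\<gamma>. \<gamma> 0 0 = x0}) X (\<lambda>\<gamma>. \<gamma> (k - 1) 1)"

definition cat_G_inf :: "('g, 'm) monoid_scheme \<Rightarrow> ('g \<Rightarrow> 'a \<Rightarrow> 'a) \<Rightarrow> 'a topology \<Rightarrow> 'a \<Rightarrow> enat" where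
  "cat_G_inf G act X x0 = (INF k\<in>{1..}. cat_G_k G act X x0 k)"

end

theory Submission
  imports Defs
begin


lemma paths_subbase_Union:
  "\<Union>{{g \<in> paths X. g ` K \<subseteq> U} | K U. compact K \<and> K \<subseteq> {0..1} \<and> openin X U} = paths X"
proof
  show "paths X \<subseteq> \<Union>{{g \<in> paths X. g ` K \<subseteq> U} | K U. compact K \<and> K \<subseteq> {0..1} \<and> openin X U}"
  proof
    fix g assume g: "g \<in> paths X"
    have "paths X \<in> {{g \<in> paths X. g ` K \<subseteq> U} | K U. compact K \<and> K \<subseteq> {0..1} \<and> openin X U}"
      by (rule CollectI, rule exI[of _ "{}"], rule exI[of _ "topspace X"]) auto
    then show "g \<in> \<Union>{{g \<in> paths X. g ` K \<subseteq> U} | K U. compact K \<and> K \<subseteq> {0..1} \<and> openin X U}"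
      using g by blast
  qed
qed auto

lemma topspace_path_space [simp]: "topspace (path_space X) = paths X"
  unfolding path_space_def topology_generated_by_topspace paths_subbase_Union ..

lemma openin_path_space_basic:
  assumes "compact K" "K \<subseteq> {0..1}" "openin X U"
  shows "openin (path_space X) {g \<in> paths X. g ` K \<subseteq> U}"
  unfolding path_space_def
  by (rule topology_generated_by_Basis) (use assms in blast)

lemma paths_continuous: "g \<in> paths X \<Longrightarrow> continuous_map (top_of_set {0..1}) X g"
  by (simp add: paths_def pathin_def)

lemma eval_continuous:
  "continuous_map (prod_topology (top_of_set {0..1}) (path_space Y)) Y (\<lambda>(t,g). g t)"
  unfolding continuous_map_def
proof (intro conjI allI impI)
  show "(\<lambda>(t, g). g t) \<in> topspace (prod_topology (top_of_set {0..1}) (path_space Y)) \<rightarrow> topspace Y"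
    using paths_continuous by (fastforce simp: continuous_map_def)
next
  fix W assume W: "openin Y W"
  show "openin (prod_topology (top_of_set {0..1}) (path_space Y))
          {x \<in> topspace (prod_topology (top_of_set {0..1}) (path_space Y)). (case x of (t, g) \<Rightarrow> g t) \<in> W}"
  proof (subst openin_subopen, intro ballI)
    fix p assume p: "p \<in> {x \<in> topspace (prod_topology (top_of_set {0..1}) (path_space Y)). (case x of (t, g) \<Rightarrow> g t) \<in> W}"
    obtain t g where pe: "p = (t,g)" by fastforce
    have t: "t \<in> {0..1}" and g: "g \<in> paths Y" and gt: "g t \<in> W" using p pe by auto
    have "openin (top_of_set {0..1}) {x \<in> topspace (top_of_set {0..1}). g x \<in> W}"
      using openin_continuous_map_preimage[OF paths_continuous[OF g] W] .
    then obtain Op where Op: "open Op" "{x \<in> {0..1}. g x \<in> W} = Op \<inter> {0..1}"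
      by (auto simp: openin_open)
    then have "t \<in> Op" using t gt by blast
    then obtain e where e: "e > 0" "ball t e \<subseteq> Op" using Op(1) open_contains_ball by blast
    define K where "K = cball t (e/2) \<inter> {0..1::real}"
    have Kc: "compact K" unfolding K_def by (simp add: compact_Int_closed)
    have KW: "g' x \<in> W" if "x \<in> K" "g' ` K \<subseteq> W" for g' x using that by blast
    have KO: "K \<subseteq> Op \<inter> {0..1}" unfolding K_def using e by (auto simp: dist_norm)
    have gK: "g ` K \<subseteq> W" using KO Op(2) by blast
    define N where "N = {0..1::real} \<inter> ball t (e/2)"
    have N: "openin (top_of_set {0..1}) N" unfolding N_def by (rule openin_open_Int) simp
    have NK: "N \<subseteq> K" unfolding N_def K_def by auto
    let ?T = "N \<times> {g' \<in> paths Y. g' ` K \<subseteq> W}"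
    show "\<exists>T. openin (prod_topology (top_of_set {0..1}) (path_space Y)) T \<and> p \<in> T \<and>
           T \<subseteq> {x \<in> topspace (prod_topology (top_of_set {0..1}) (path_space Y)). (case x of (t, g) \<Rightarrow> g t) \<in> W}"
    proof (intro exI conjI)
      show "openin (prod_topology (top_of_set {0..1}) (path_space Y)) ?T"
        using N openin_path_space_basic[OF Kc _ W] by (simp add: openin_prod_Times_iff K_def)
      show "p \<in> ?T" using pe t g gK e by (auto simp: N_def)
      show "?T \<subseteq> {x \<in> topspace (prod_topology (top_of_set {0..1}) (path_space Y)). (case x of (t, g) \<Rightarrow> g t) \<in> W}"
        using NK N_def by auto
    qed
  qed
qed

lemma exp_continuous:
  assumes H: "continuous_map (prod_topology (top_of_set {0..1}) Z) Y H"
  shows "continuous_map Z (path_space Y) (\<lambda>z. restrict (\<lambda>t. H (t,z)) {0..1})"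
proof -
  have inpaths: "restrict (\<lambda>t. H (t,z)) {0..1} \<in> paths Y" if z: "z \<in> topspace Z" for z
  proof -
    have "continuous_map (top_of_set {0..1}) Y (H \<circ> (\<lambda>t. (t,z)))"
      by (rule continuous_map_compose[OF _ H]) (simp add: continuous_map_pairwise o_def z)
    then have "continuous_map (top_of_set {0..1}) Y (restrict (\<lambda>t. H (t,z)) {0..1})"
      by (rule continuous_map_eq) auto
    then show ?thesis by (simp add: paths_def pathin_def)
  qed
  show ?thesis
    unfolding path_space_def
  proof (rule continuous_on_generated_topo)
    show "(\<lambda>z. restrict (\<lambda>t. H (t, z)) {0..1}) ` topspace Z
      \<subseteq> \<Union> {{g \<in> paths Y. g ` K \<subseteq> U} |K U. compact K \<and> K \<subseteq> {0..1} \<and> openin Y U}"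
      unfolding paths_subbase_Union using inpaths by blast
  next
    fix S assume "S \<in> {{g \<in> paths Y. g ` K \<subseteq> U} |K U. compact K \<and> K \<subseteq> {0..1} \<and> openin Y U}"
    then obtain K U where S: "S = {g \<in> paths Y. g ` K \<subseteq> U}" and K: "compact K" "K \<subseteq> {0..1}" and U: "openin Y U"
      by blast
    have eq1: "restrict (\<lambda>t. H (t, z)) {0..1} \<in> S \<longleftrightarrow> (\<forall>t\<in>K. H (t,z) \<in> U)"
      if z: "z \<in> topspace Z" for z
    proof -
      have im: "restrict (\<lambda>t. H (t, z)) {0..1} ` K = (\<lambda>t. H (t, z)) ` K"
        using K(2) by (intro image_cong) auto
      have "restrict (\<lambda>t. H (t, z)) {0..1} \<in> S \<longleftrightarrow> restrict (\<lambda>t. H (t, z)) {0..1} ` K \<subseteq> U"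
        using inpaths[OF z] unfolding S by blast
      also have "\<dots> \<longleftrightarrow> (\<lambda>t. H (t, z)) ` K \<subseteq> U" by (simp only: im)
      also have "\<dots> \<longleftrightarrow> (\<forall>t\<in>K. H (t,z) \<in> U)" by (rule image_subset_iff)
      finally show ?thesis .
    qed
    have eq: "(\<lambda>z. restrict (\<lambda>t. H (t, z)) {0..1}) -` S \<inter> topspace Z = {z \<in> topspace Z. \<forall>t\<in>K. H (t,z) \<in> U}"
      using eq1 by blast
    have WO: "openin (prod_topology (top_of_set {0..1}) Z) {p \<in> topspace (prod_topology (top_of_set {0..1}) Z). H p \<in> U}"
      using openin_continuous_map_preimage[OF H U] .
    have Kc: "compactin (top_of_set {0..1}) K" using K by (simp add: compactin_subtopology)
    show "openin Z ((\<lambda>z. restrict (\<lambda>t. H (t, z)) {0..1}) -` S \<inter> topspace Z)"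
      unfolding eq
    proof (subst openin_subopen, intro ballI)
      fix z assume z: "z \<in> {z \<in> topspace Z. \<forall>t\<in>K. H (t, z) \<in> U}"
      have zt: "z \<in> topspace Z" and zK: "\<forall>t\<in>K. H (t, z) \<in> U" using z by auto
      have "K \<times> {z} \<subseteq> {p \<in> topspace (prod_topology (top_of_set {0..1}) Z). H p \<in> U}"
      proof
        fix p assume "p \<in> K \<times> {z}"
        then obtain t where p: "p = (t, z)" "t \<in> K" by blast
        then have "t \<in> {0..1}" using K(2) by blast
        then show "p \<in> {p \<in> topspace (prod_topology (top_of_set {0..1}) Z). H p \<in> U}"
          using p zt zK by simp
      qed
      from tube_lemma_left[OF WO Kc zt this]
      obtain U' V where UV: "openin (top_of_set {0..1}) U'" "openin Z V" "K \<subseteq> U'" "z \<in> V"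
        "U' \<times> V \<subseteq> {p \<in> topspace (prod_topology (top_of_set {0..1}) Z). H p \<in> U}"
        by blast
      have "V \<subseteq> {z \<in> topspace Z. \<forall>t\<in>K. H (t, z) \<in> U}"
      proof
        fix z' assume z': "z' \<in> V"
        then have "z' \<in> topspace Z" using openin_subset[OF UV(2)] by blast
        moreover have "\<forall>t\<in>K. H (t, z') \<in> U"
        proof
          fix t assume "t \<in> K"
          then have "(t, z') \<in> U' \<times> V" using UV(3) z' by blast
          then show "H (t, z') \<in> U" using UV(5) by blast
        qed
        ultimately show "z' \<in> {z \<in> topspace Z. \<forall>t\<in>K. H (t, z) \<in> U}" by blast
      qed
      then show "\<exists>T. openin Z T \<and> z \<in> T \<and> T \<subseteq> {z \<in> topspace Z. \<forall>t\<in>K. H (t, z) \<in> U}"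
        using UV(2,4) by blast
    qed
  qed
qed



definition Sec :: "'e topology \<Rightarrow> 'b topology \<Rightarrow> ('e \<Rightarrow> 'b) \<Rightarrow> 'b set \<Rightarrow> bool" where
  "Sec E B p U \<longleftrightarrow> (\<exists>\<sigma>. continuous_map (subtopology B U) E \<sigma> \<and>
                 homotopic_with (\<lambda>_. True) (subtopology B U) B (p \<circ> \<sigma>) id)"

lemma secat_Sec: "secat E B p = Inf {enat n | n. \<exists>U :: nat \<Rightarrow> 'b set.
      (\<forall>i\<le>n. openin B (U i)) \<and> (\<Union>i\<le>n. U i) = topspace B \<and> (\<forall>i\<le>n. Sec E B p (U i))}"
  by (simp add: secat_def Sec_def)

lemma secat_le:
  fixes B :: "'b topology" and B' :: "'c topology" and E :: "'e topology" and E' :: "'f topology"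
  assumes f: "continuous_map B B' f"
    and H: "\<And>U. openin B' U \<Longrightarrow> Sec E' B' p' U \<Longrightarrow> Sec E B p {x \<in> topspace B. f x \<in> U}"
  shows "secat E B p \<le> secat E' B' p'"
  unfolding secat_Sec
proof (rule Inf_greatest)
  fix x assume "x \<in> {enat n | n. \<exists>U :: nat \<Rightarrow> 'c set.
      (\<forall>i\<le>n. openin B' (U i)) \<and> (\<Union>i\<le>n. U i) = topspace B' \<and> (\<forall>i\<le>n. Sec E' B' p' (U i))}"
  then obtain n U where x: "x = enat n" and U: "\<forall>i\<le>n. openin B' (U i)" "(\<Union>i\<le>n. U i) = topspace B'"
    "\<forall>i\<le>n. Sec E' B' p' (U i)" by blast
  let ?U = "\<lambda>i. {x \<in> topspace B. f x \<in> U i}"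
  have cov: "(\<Union>i\<le>n. ?U i) = topspace B"
  proof
    show "topspace B \<subseteq> (\<Union>i\<le>n. ?U i)"
    proof
      fix y assume y: "y \<in> topspace B"
      then have "f y \<in> topspace B'" using f by (simp add: continuous_map_def Pi_iff)
      then show "y \<in> (\<Union>i\<le>n. ?U i)" using U(2) y by blast
    qed
  qed auto
  have o: "\<forall>i\<le>n. openin B (?U i)" using U(1) openin_continuous_map_preimage[OF f] by blast
  have se: "\<forall>i\<le>n. Sec E B p (?U i)" using U(1,3) H by blast
  have ex: "\<exists>U :: nat \<Rightarrow> 'b set.
      (\<forall>i\<le>n. openin B (U i)) \<and> (\<Union>i\<le>n. U i) = topspace B \<and> (\<forall>i\<le>n. Sec E B p (U i))"
    by (rule exI[of _ ?U], intro conjI o se cov)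
  have mem: "x \<in> {enat n | n. \<exists>U :: nat \<Rightarrow> 'b set.
      (\<forall>i\<le>n. openin B (U i)) \<and> (\<Union>i\<le>n. U i) = topspace B \<and> (\<forall>i\<le>n. Sec E B p (U i))}"
    unfolding x by (rule CollectI, rule exI[of _ n], rule conjI[OF refl ex])
  show "Inf {enat n | n. \<exists>U :: nat \<Rightarrow> 'b set.
      (\<forall>i\<le>n. openin B (U i)) \<and> (\<Union>i\<le>n. U i) = topspace B \<and> (\<forall>i\<le>n. Sec E B p (U i))} \<le> x"
    using mem by (rule Inf_lower)
qed

lemma hom_eq:
  assumes "homotopic_with (\<lambda>_. True) X Y f g"
    and "\<And>x. x \<in> topspace X \<Longrightarrow> f' x = f x" "\<And>x. x \<in> topspace X \<Longrightarrow> g' x = g x"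
  shows "homotopic_with (\<lambda>_. True) X Y f' g'"
proof -
  have cf: "continuous_map X Y f" "continuous_map X Y g"
    using homotopic_with_imp_continuous_maps[OF assms(1)] by auto
  have cf': "continuous_map X Y f'"
    by (rule continuous_map_eq[OF cf(1)]) (simp add: assms(2))
  have cg: "continuous_map X Y g"
    by (rule cf(2))
  have "homotopic_with (\<lambda>_. True) X Y f' f"
    by (rule homotopic_with_equal[OF _ _ cf']) (simp_all add: assms(2))
  moreover have "homotopic_with (\<lambda>_. True) X Y g g'"
    by (rule homotopic_with_equal[OF _ _ cg]) (simp_all add: assms(3))
  ultimately show ?thesis using assms(1) by (meson homotopic_with_trans)
qed

lemma istopology_quotient:
  "istopology (\<lambda>U. U \<subseteq> f ` topspace X \<and> openin X {x \<in> topspace X. f x \<in> U})"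
  unfolding istopology_def
proof (rule conjI; intro allI impI)
  fix S T
  assume S: "S \<subseteq> f ` topspace X \<and> openin X {x \<in> topspace X. f x \<in> S}"
    and T: "T \<subseteq> f ` topspace X \<and> openin X {x \<in> topspace X. f x \<in> T}"
  have 1: "{x \<in> topspace X. f x \<in> S \<inter> T} = {x \<in> topspace X. f x \<in> S} \<inter> {x \<in> topspace X. f x \<in> T}"
    by blast
  show "S \<inter> T \<subseteq> f ` topspace X \<and> openin X {x \<in> topspace X. f x \<in> S \<inter> T}"
    unfolding 1 using S T openin_Int by blast
next
  fix K
  assume K: "\<forall>U\<in>K. U \<subseteq> f ` topspace X \<and> openin X {x \<in> topspace X. f x \<in> U}"
  have 2: "{x \<in> topspace X. f x \<in> \<Union>K} = \<Union>((\<lambda>U. {x \<in> topspace X. f x \<in> U}) ` K)"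
    by blast
  have "openin X (\<Union>((\<lambda>U. {x \<in> topspace X. f x \<in> U}) ` K))"
    by (rule openin_Union) (use K in blast)
  then show "\<Union>K \<subseteq> f ` topspace X \<and> openin X {x \<in> topspace X. f x \<in> \<Union>K}"
    unfolding 2 using K by blast
qed

lemma openin_quotient:
  "openin (quotient_topology X f) U \<longleftrightarrow> U \<subseteq> f ` topspace X \<and> openin X {x \<in> topspace X. f x \<in> U}"
  unfolding quotient_topology_def topology_inverse'[OF istopology_quotient[of f X]] ..

lemma topspace_quotient [simp]: "topspace (quotient_topology X f) = f ` topspace X"
proof
  show "topspace (quotient_topology X f) \<subseteq> f ` topspace X"
    using openin_topspace[of "quotient_topology X f"] unfolding openin_quotient by blast
  have e: "{x \<in> topspace X. f x \<in> f ` topspace X} = topspace X" by blast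
  have "openin (quotient_topology X f) (f ` topspace X)"
    unfolding openin_quotient e by simp
  then show "f ` topspace X \<subseteq> topspace (quotient_topology X f)"
    by (rule openin_subset)
qed

lemma continuous_quotient: "continuous_map X (quotient_topology X f) f"
  unfolding continuous_map_def topspace_quotient
proof (rule conjI; (intro allI impI)?)
  show "f \<in> topspace X \<rightarrow> f ` topspace X" by blast
  fix U assume "openin (quotient_topology X f) U"
  then show "openin X {x \<in> topspace X. f x \<in> U}" unfolding openin_quotient by blast
qed

lemma pair_cont:
  assumes "continuous_map Z P \<sigma>"
  shows "continuous_map (prod_topology T Z) (prod_topology T P) (\<lambda>(t,u). (t, \<sigma> u))"
proof -
  have e1: "fst \<circ> (\<lambda>(t,u). (t, \<sigma> u)) = fst" by (simp add: fun_eq_iff case_prod_beta)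
  have e2: "snd \<circ> (\<lambda>(t,u). (t, \<sigma> u)) = \<sigma> \<circ> snd" by (simp add: fun_eq_iff case_prod_beta)
  have "continuous_map (prod_topology T Z) P (\<sigma> \<circ> snd)"
    using continuous_map_compose[OF continuous_map_snd assms] .
  then show ?thesis unfolding continuous_map_pairwise e1 e2 using continuous_map_fst by blast
qed

lemma Sec_LS_imp:
  assumes "Sec (based_paths_space Y y0) Y (\<lambda>g. g 1) U"
  shows "homotopic_with (\<lambda>_. True) (subtopology Y U) Y (\<lambda>_. y0) id"
proof -
  obtain \<sigma> where c: "continuous_map (subtopology Y U) (based_paths_space Y y0) \<sigma>"
    and h: "homotopic_with (\<lambda>_. True) (subtopology Y U) Y ((\<lambda>g. g 1) \<circ> \<sigma>) id"
    using assms by (auto simp: Sec_def)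
  have cp: "continuous_map (subtopology Y U) (path_space Y) \<sigma>"
    and s0: "\<And>u. u \<in> topspace (subtopology Y U) \<Longrightarrow> \<sigma> u 0 = y0"
    using c by (auto simp: based_paths_space_def continuous_map_in_subtopology Pi_iff)
  have "continuous_map (prod_topology (top_of_set {0..1}) (subtopology Y U)) Y
          ((\<lambda>(t,g). g t) \<circ> (\<lambda>(t,u). (t, \<sigma> u)))"
    by (rule continuous_map_compose[OF pair_cont[OF cp] eval_continuous])
  then have "homotopic_with (\<lambda>_. True) (subtopology Y U) Y (\<lambda>u. \<sigma> u 0) (\<lambda>u. \<sigma> u 1)"
    unfolding homotopic_with_def by (intro exI[of _ "(\<lambda>(t,g). g t) \<circ> (\<lambda>(t,u). (t, \<sigma> u))"]) auto
  then have "homotopic_with (\<lambda>_. True) (subtopology Y U) Y (\<lambda>_. y0) ((\<lambda>g. g 1) \<circ> \<sigma>)"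
    by (rule hom_eq) (auto simp: s0)
  then show ?thesis using h by (rule homotopic_with_trans)
qed

lemma LS_imp_Sec:
  assumes "homotopic_with (\<lambda>_. True) (subtopology Y U) Y (\<lambda>_. y0) id"
  shows "Sec (based_paths_space Y y0) Y (\<lambda>g. g 1) U"
proof -
  obtain h :: "real \<times> _ \<Rightarrow> _" where hc: "continuous_map (prod_topology (top_of_set {0..1}) (subtopology Y U)) Y h"
    and h0: "\<And>x. h (0,x) = y0" and h1: "\<And>x. h (1,x) = x"
    using assms by (auto simp: homotopic_with_def)
  let ?\<sigma> = "\<lambda>z. restrict (\<lambda>t. h (t,z)) {0..1}"
  have c: "continuous_map (subtopology Y U) (path_space Y) ?\<sigma>"
    by (rule exp_continuous[OF hc])
  have "continuous_map (subtopology Y U) (based_paths_space Y y0) ?\<sigma>"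
    unfolding based_paths_space_def continuous_map_in_subtopology
    using c h0 by (auto simp: continuous_map_def Pi_iff)
  moreover have "homotopic_with (\<lambda>_. True) (subtopology Y U) Y ((\<lambda>g. g 1) \<circ> ?\<sigma>) id"
    by (subst homotopic_with_sym, rule homotopic_with_equal) (auto simp: h1 continuous_map_from_subtopology continuous_map_id)
  ultimately show ?thesis unfolding Sec_def by blast
qed

lemma Sec_TC_imp:
  assumes "Sec (path_space Y) (prod_topology Y Y) (\<lambda>g. (g 0, g 1)) U"
  shows "homotopic_with (\<lambda>_. True) (subtopology (prod_topology Y Y) U) Y fst snd"
proof -
  obtain \<sigma> where cp: "continuous_map (subtopology (prod_topology Y Y) U) (path_space Y) \<sigma>"
    and h: "homotopic_with (\<lambda>_. True) (subtopology (prod_topology Y Y) U) (prod_topology Y Y) ((\<lambda>g. (g 0, g 1)) \<circ> \<sigma>) id"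
    using assms by (auto simp: Sec_def)
  have "continuous_map (prod_topology (top_of_set {0..1}) (subtopology (prod_topology Y Y) U)) Y
          ((\<lambda>(t,g). g t) \<circ> (\<lambda>(t,u). (t, \<sigma> u)))"
    by (rule continuous_map_compose[OF pair_cont[OF cp] eval_continuous])
  then have m: "homotopic_with (\<lambda>_. True) (subtopology (prod_topology Y Y) U) Y (\<lambda>u. \<sigma> u 0) (\<lambda>u. \<sigma> u 1)"
    unfolding homotopic_with_def by (intro exI[of _ "(\<lambda>(t,g). g t) \<circ> (\<lambda>(t,u). (t, \<sigma> u))"]) auto
  have "homotopic_with (\<lambda>_. True) (subtopology (prod_topology Y Y) U) Y (fst \<circ> ((\<lambda>g. (g 0, g 1)) \<circ> \<sigma>)) (fst \<circ> id)"
    by (rule homotopic_with_compose_continuous_map_left[OF h continuous_map_fst]) auto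
  then have a: "homotopic_with (\<lambda>_. True) (subtopology (prod_topology Y Y) U) Y fst (\<lambda>u. \<sigma> u 0)"
    by (subst homotopic_with_sym) (simp add: o_def)
  have "homotopic_with (\<lambda>_. True) (subtopology (prod_topology Y Y) U) Y (snd \<circ> ((\<lambda>g. (g 0, g 1)) \<circ> \<sigma>)) (snd \<circ> id)"
    by (rule homotopic_with_compose_continuous_map_left[OF h continuous_map_snd]) auto
  then have b: "homotopic_with (\<lambda>_. True) (subtopology (prod_topology Y Y) U) Y (\<lambda>u. \<sigma> u 1) snd"
    by (simp add: o_def)
  show ?thesis using a m b by (meson homotopic_with_trans)
qed

lemma TC_imp_Sec:
  assumes "homotopic_with (\<lambda>_. True) (subtopology (prod_topology Y Y) U) Y fst snd"
  shows "Sec (path_space Y) (prod_topology Y Y) (\<lambda>g. (g 0, g 1)) U"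
proof -
  obtain h :: "real \<times> _ \<Rightarrow> _" where hc: "continuous_map (prod_topology (top_of_set {0..1}) (subtopology (prod_topology Y Y) U)) Y h"
    and h0: "\<And>x. h (0,x) = fst x" and h1: "\<And>x. h (1,x) = snd x"
    using assms by (auto simp: homotopic_with_def)
  let ?\<sigma> = "\<lambda>z. restrict (\<lambda>t. h (t,z)) {0..1}"
  have c: "continuous_map (subtopology (prod_topology Y Y) U) (path_space Y) ?\<sigma>"
    by (rule exp_continuous[OF hc])
  moreover have "homotopic_with (\<lambda>_. True) (subtopology (prod_topology Y Y) U) (prod_topology Y Y) ((\<lambda>g. (g 0, g 1)) \<circ> ?\<sigma>) id"
    by (subst homotopic_with_sym, rule homotopic_with_equal) (auto simp: h0 h1 continuous_map_from_subtopology continuous_map_id)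
  ultimately show ?thesis unfolding Sec_def by blast
qed



lemma path_comp_cont:
  assumes "continuous_map Z (multipath_space G act X k) \<phi>" "j < k"
  shows "continuous_map Z (path_space X) (\<lambda>z. \<phi> z j)"
proof -
  have "continuous_map Z (product_topology (\<lambda>_. path_space X) {..<k}) \<phi>"
    using assms(1) unfolding multipath_space_def by (rule continuous_map_into_fulltopology)
  from continuous_map_compose[OF this continuous_map_product_projection[of j "{..<k}" "\<lambda>_. path_space X"]]
  show ?thesis using assms(2) by (simp add: o_def)
qed

lemma single_hom:
  assumes "continuous_map Z (multipath_space G act X k) \<phi>" "j < k"
  shows "homotopic_with (\<lambda>_. True) Z (orbit_space G act X)
           (\<lambda>z. orbit G act (\<phi> z j 0)) (\<lambda>z. orbit G act (\<phi> z j 1))"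
proof -
  have c: "continuous_map (prod_topology (top_of_set {0..1}) Z) (orbit_space G act X)
     (orbit G act \<circ> ((\<lambda>(t,g). g t) \<circ> (\<lambda>(t,z). (t, \<phi> z j))))"
    unfolding orbit_space_def
    by (intro continuous_map_compose[OF _ continuous_quotient] continuous_map_compose[OF pair_cont eval_continuous]
          path_comp_cont[OF assms])
  show ?thesis
    unfolding homotopic_with_def
    by (rule exI[of _ "orbit G act \<circ> ((\<lambda>(t,g). g t) \<circ> (\<lambda>(t,z). (t, \<phi> z j)))"]) (use c in auto)
qed

lemma chain_hom:
  assumes "continuous_map Z (multipath_space G act X k) \<phi>" "j < k"
  shows "homotopic_with (\<lambda>_. True) Z (orbit_space G act X)
           (\<lambda>z. orbit G act (\<phi> z 0 0)) (\<lambda>z. orbit G act (\<phi> z j 1))"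
  using assms(2)
proof (induction j)
  case 0
  then show ?case using single_hom[OF assms(1)] by simp
next
  case (Suc j)
  have IH: "homotopic_with (\<lambda>_. True) Z (orbit_space G act X)
           (\<lambda>z. orbit G act (\<phi> z 0 0)) (\<lambda>z. orbit G act (\<phi> z (Suc j) 0))"
  proof (rule hom_eq[OF Suc.IH])
    fix z assume "z \<in> topspace Z"
    then have "\<phi> z \<in> topspace (multipath_space G act X k)"
      using assms(1) by (auto simp: continuous_map_def)
    then show "orbit G act (\<phi> z (Suc j) 0) = orbit G act (\<phi> z j 1)"
      using Suc.prems by (auto simp: multipath_space_def)
  qed (use Suc.prems in auto)
  show ?case using homotopic_with_trans[OF IH single_hom[OF assms(1) Suc.prems]] .
qed



lemma cat_rev:
  assumes k: "k \<ge> 1"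
    and hs: "continuous_map (orbit_space G act X) X s"
    and sec: "\<forall>y\<in>topspace (orbit_space G act X). orbit G act (s y) = y"
    and V: "Sec (subtopology (multipath_space G act X k) {\<gamma>. \<gamma> 0 0 = x0}) X (\<lambda>\<gamma>. \<gamma> (k - 1) 1) V"
  shows "Sec (based_paths_space (orbit_space G act X) (orbit G act x0)) (orbit_space G act X) (\<lambda>g. g 1)
           {y \<in> topspace (orbit_space G act X). s y \<in> V}"
proof -
  let ?Q = "orbit_space G act X" and ?\<rho> = "orbit G act"
  let ?U = "{y \<in> topspace ?Q. s y \<in> V}"
  obtain \<sigma> where c\<sigma>: "continuous_map (subtopology X V) (subtopology (multipath_space G act X k) {\<gamma>. \<gamma> 0 0 = x0}) \<sigma>"
    and h: "homotopic_with (\<lambda>_. True) (subtopology X V) X ((\<lambda>\<gamma>. \<gamma> (k - 1) 1) \<circ> \<sigma>) id"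
    using V unfolding Sec_def by blast
  have cs: "continuous_map (subtopology ?Q ?U) (subtopology X V) s"
    using hs by (simp add: continuous_map_in_subtopology continuous_map_from_subtopology Pi_iff)
  have cr: "continuous_map X ?Q ?\<rho>" unfolding orbit_space_def by (rule continuous_quotient)
  have h1: "homotopic_with (\<lambda>_. True) (subtopology ?Q ?U) X (((\<lambda>\<gamma>. \<gamma> (k - 1) 1) \<circ> \<sigma>) \<circ> s) (id \<circ> s)"
    by (rule homotopic_with_compose_continuous_map_right[OF h cs]) auto
  have h2: "homotopic_with (\<lambda>_. True) (subtopology ?Q ?U) ?Q (?\<rho> \<circ> (((\<lambda>\<gamma>. \<gamma> (k - 1) 1) \<circ> \<sigma>) \<circ> s)) (?\<rho> \<circ> (id \<circ> s))"
    by (rule homotopic_with_compose_continuous_map_left[OF h1 cr]) auto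
  have c\<phi>0: "continuous_map (subtopology ?Q ?U) (subtopology (multipath_space G act X k) {\<gamma>. \<gamma> 0 0 = x0}) (\<sigma> \<circ> s)"
    by (rule continuous_map_compose[OF cs c\<sigma>])
  then have c\<phi>: "continuous_map (subtopology ?Q ?U) (multipath_space G act X k) (\<sigma> \<circ> s)"
    by (rule continuous_map_into_fulltopology)
  have h3: "homotopic_with (\<lambda>_. True) (subtopology ?Q ?U) ?Q
           (\<lambda>z. ?\<rho> ((\<sigma> \<circ> s) z 0 0)) (\<lambda>z. ?\<rho> ((\<sigma> \<circ> s) z (k - 1) 1))"
    using chain_hom[OF c\<phi>, of "k - 1"] k by simp
  have h4: "homotopic_with (\<lambda>_. True) (subtopology ?Q ?U) ?Q (\<lambda>_. ?\<rho> x0) (?\<rho> \<circ> (((\<lambda>\<gamma>. \<gamma> (k - 1) 1) \<circ> \<sigma>) \<circ> s))"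
  proof (rule hom_eq[OF h3])
    fix z assume "z \<in> topspace (subtopology ?Q ?U)"
    then have "(\<sigma> \<circ> s) z \<in> topspace (subtopology (multipath_space G act X k) {\<gamma>. \<gamma> 0 0 = x0})"
      using continuous_map_image_subset_topspace[OF c\<phi>0] by blast
    then have "(\<sigma> \<circ> s) z \<in> {\<gamma>. \<gamma> 0 0 = x0}"
      by (simp only: topspace_subtopology Int_iff)
    then show "?\<rho> x0 = ?\<rho> ((\<sigma> \<circ> s) z 0 0)" by simp
  qed simp
  have h5: "homotopic_with (\<lambda>_. True) (subtopology ?Q ?U) ?Q (\<lambda>_. ?\<rho> x0) id"
  proof (rule hom_eq[OF homotopic_with_trans[OF h4 h2]])
    fix x assume "x \<in> topspace (subtopology ?Q ?U)"
    then have "x \<in> topspace ?Q" by (simp only: topspace_subtopology Int_iff)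
    then show "id x = (?\<rho> \<circ> (id \<circ> s)) x" using sec by simp
  qed simp
  show ?thesis by (rule LS_imp_Sec[OF h5])
qed

lemma TC_rev:
  assumes k: "k \<ge> 1"
    and hs: "continuous_map (orbit_space G act X) X s"
    and sec: "\<forall>y\<in>topspace (orbit_space G act X). orbit G act (s y) = y"
    and V: "Sec (multipath_space G act X k) (prod_topology X X) (\<lambda>\<gamma>. (\<gamma> 0 0, \<gamma> (k - 1) 1)) V"
  shows "Sec (path_space (orbit_space G act X)) (prod_topology (orbit_space G act X) (orbit_space G act X))
            (\<lambda>g. (g 0, g 1))
           {u \<in> topspace (prod_topology (orbit_space G act X) (orbit_space G act X)). (s (fst u), s (snd u)) \<in> V}"
proof -
  let ?Q = "orbit_space G act X" and ?\<rho> = "orbit G act"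
  let ?U = "{u \<in> topspace (prod_topology ?Q ?Q). (s (fst u), s (snd u)) \<in> V}"
  let ?S = "\<lambda>u. (s (fst u), s (snd u))"
  let ?Z = "subtopology (prod_topology ?Q ?Q) ?U"
  let ?\<pi> = "\<lambda>\<gamma>. (\<gamma> 0 0, \<gamma> (k - 1) 1)"
  obtain \<sigma> where c\<sigma>: "continuous_map (subtopology (prod_topology X X) V) (multipath_space G act X k) \<sigma>"
    and h: "homotopic_with (\<lambda>_. True) (subtopology (prod_topology X X) V) (prod_topology X X) (?\<pi> \<circ> \<sigma>) id"
    using V by (auto simp: Sec_def)
  have cS0: "continuous_map (prod_topology ?Q ?Q) (prod_topology X X) ?S"
    unfolding continuous_map_paired
    using continuous_map_compose[OF continuous_map_fst hs] continuous_map_compose[OF continuous_map_snd hs]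
    by (simp add: o_def) blast
  have cS: "continuous_map ?Z (subtopology (prod_topology X X) V) ?S"
    using cS0 by (auto simp: continuous_map_in_subtopology continuous_map_from_subtopology)
  have cr: "continuous_map X ?Q ?\<rho>" unfolding orbit_space_def by (rule continuous_quotient)
  have crf: "continuous_map (prod_topology X X) ?Q (?\<rho> \<circ> fst)"
    by (rule continuous_map_compose[OF continuous_map_fst cr])
  have crs: "continuous_map (prod_topology X X) ?Q (?\<rho> \<circ> snd)"
    by (rule continuous_map_compose[OF continuous_map_snd cr])
  have h1: "homotopic_with (\<lambda>_. True) ?Z (prod_topology X X) ((?\<pi> \<circ> \<sigma>) \<circ> ?S) (id \<circ> ?S)"
    by (rule homotopic_with_compose_continuous_map_right[OF h cS]) auto
  have ha: "homotopic_with (\<lambda>_. True) ?Z ?Q ((?\<rho> \<circ> fst) \<circ> ((?\<pi> \<circ> \<sigma>) \<circ> ?S)) ((?\<rho> \<circ> fst) \<circ> (id \<circ> ?S))"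
    by (rule homotopic_with_compose_continuous_map_left[OF h1 crf]) auto
  have hb: "homotopic_with (\<lambda>_. True) ?Z ?Q ((?\<rho> \<circ> snd) \<circ> ((?\<pi> \<circ> \<sigma>) \<circ> ?S)) ((?\<rho> \<circ> snd) \<circ> (id \<circ> ?S))"
    by (rule homotopic_with_compose_continuous_map_left[OF h1 crs]) auto
  have c\<phi>: "continuous_map ?Z (multipath_space G act X k) (\<sigma> \<circ> ?S)"
    by (rule continuous_map_compose[OF cS c\<sigma>])
  have h3: "homotopic_with (\<lambda>_. True) ?Z ?Q
           (\<lambda>z. ?\<rho> ((\<sigma> \<circ> ?S) z 0 0)) (\<lambda>z. ?\<rho> ((\<sigma> \<circ> ?S) z (k - 1) 1))"
    using chain_hom[OF c\<phi>, of "k - 1"] k by simp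
  have tQ: "\<And>z. z \<in> topspace ?Z \<Longrightarrow> fst z \<in> topspace ?Q \<and> snd z \<in> topspace ?Q"
    by auto
  have ha': "homotopic_with (\<lambda>_. True) ?Z ?Q fst (\<lambda>z. ?\<rho> ((\<sigma> \<circ> ?S) z 0 0))"
    by (rule hom_eq[OF homotopic_with_symD[OF ha]]) (use sec tQ in auto)
  have hb': "homotopic_with (\<lambda>_. True) ?Z ?Q (\<lambda>z. ?\<rho> ((\<sigma> \<circ> ?S) z (k - 1) 1)) snd"
    by (rule hom_eq[OF hb]) (use sec tQ in auto)
  have "homotopic_with (\<lambda>_. True) ?Z ?Q fst snd"
    using ha' h3 hb' by (meson homotopic_with_trans)
  then show ?thesis by (rule TC_imp_Sec)
qed



lemma topspace_orbit_space: "topspace (orbit_space G act X) = orbit G act ` topspace X"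
  by (simp add: orbit_space_def)

lemma continuous_orbit: "continuous_map X (orbit_space G act X) (orbit G act)"
  unfolding orbit_space_def by (rule continuous_quotient)

lemma less3: "(i::nat) < 3 \<Longrightarrow> i = 0 \<or> i = 1 \<or> i = 2" by auto

lemma cat_fwd:
  assumes hs: "continuous_map (orbit_space G act X) X s"
    and sec: "\<forall>y\<in>topspace (orbit_space G act X). orbit G act (s y) = y"
    and x0: "x0 \<in> topspace X"
    and U: "Sec (based_paths_space (orbit_space G act X) (orbit G act x0)) (orbit_space G act X) (\<lambda>g. g 1) U"
  shows "Sec (subtopology (multipath_space G act X 3) {\<gamma>. \<gamma> 0 0 = x0}) X (\<lambda>\<gamma>. \<gamma> (3 - 1) 1)
           {x \<in> topspace X. orbit G act x \<in> U}"
proof -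
  let ?Q = "orbit_space G act X" and ?\<rho> = "orbit G act"
  let ?W = "{x \<in> topspace X. ?\<rho> x \<in> U}"
  have hU: "homotopic_with (\<lambda>_. True) (subtopology ?Q U) ?Q (\<lambda>_. ?\<rho> x0) id"
    by (rule Sec_LS_imp[OF U])
  obtain H :: "real \<times> 'a set \<Rightarrow> 'a set" where Hc: "continuous_map (prod_topology (top_of_set {0..1}) (subtopology ?Q U)) ?Q H"
    and H0: "\<And>u. H (0,u) = ?\<rho> x0" and H1: "\<And>u. H (1,u) = u"
    using hU unfolding homotopic_with_def by auto
  have cr: "continuous_map X ?Q ?\<rho>" by (rule continuous_orbit)
  have c\<rho>: "continuous_map (subtopology X ?W) (subtopology ?Q U) ?\<rho>"
    by (simp add: continuous_map_in_subtopology continuous_map_from_subtopology[OF cr] Pi_iff)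
  have cM0: "continuous_map (subtopology X ?W) (path_space X)
      (\<lambda>z. restrict (\<lambda>t. (s \<circ> (H \<circ> (\<lambda>(t,u). (t, ?\<rho> u)))) (t, z)) {0..1})"
    by (rule exp_continuous[OF continuous_map_compose[OF continuous_map_compose[OF pair_cont[OF c\<rho>] Hc] hs]])
  have cM: "continuous_map (subtopology X ?W) (path_space X) (\<lambda>x. restrict (\<lambda>t. s (H (t, ?\<rho> x))) {0..1})"
    using cM0 by (simp add: o_def)
  have cC00: "continuous_map (subtopology X ?W) (path_space X) (\<lambda>z. restrict (\<lambda>t. (\<lambda>_. x0) (t, z)) {0..1})"
    by (rule exp_continuous) (simp add: x0)
  then have cC0: "continuous_map (subtopology X ?W) (path_space X) (\<lambda>x. restrict (\<lambda>t. x0) {0..1})"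
    by simp
  have cCC: "continuous_map (subtopology X ?W) (path_space X) (\<lambda>z. restrict (\<lambda>t. snd (t, z)) {0..1})"
    by (rule exp_continuous[OF continuous_map_into_fulltopology[OF continuous_map_snd]])
  then have cC: "continuous_map (subtopology X ?W) (path_space X) (\<lambda>x. restrict (\<lambda>t. x) {0..1})"
    by simp
  define \<tau> where "\<tau> x = restrict (\<lambda>i::nat. if i = 0 then restrict (\<lambda>t. x0) {0..1}
       else if i = 1 then restrict (\<lambda>t. s (H (t, ?\<rho> x))) {0..1} else restrict (\<lambda>t. x) {0..1}) {..<3}" for x
  have cP: "continuous_map (subtopology X ?W) (product_topology (\<lambda>_. path_space X) {..<3}) \<tau>"
    unfolding continuous_map_componentwise
  proof (intro conjI ballI)
    show "\<tau> ` topspace (subtopology X ?W) \<subseteq> extensional {..<3}"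
      by (auto simp: \<tau>_def)
    fix k :: nat assume "k \<in> {..<3}"
    then have "k = 0 \<or> k = 1 \<or> k = 2" by auto
    then show "continuous_map (subtopology X ?W) (path_space X) (\<lambda>x. \<tau> x k)"
      using cC0 cM cC by (auto simp: \<tau>_def)
  qed
  have tQ: "?\<rho> x \<in> topspace ?Q" if "x \<in> topspace X" for x
    using that by (simp add: topspace_orbit_space)
  have mem: "\<tau> x \<in> {\<gamma>. \<forall>i. Suc i < 3 \<longrightarrow> orbit G act (\<gamma> i 1) = orbit G act (\<gamma> (Suc i) 0)} \<inter> {\<gamma>. \<gamma> 0 0 = x0}"
    if x: "x \<in> topspace (subtopology X ?W)" for x
  proof -
    have xX: "x \<in> topspace X" using x by simp
    have a: "orbit G act (s (?\<rho> x0)) = ?\<rho> x0" using sec tQ[OF x0] by blast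
    have b: "orbit G act (s (?\<rho> x)) = ?\<rho> x" using sec tQ[OF xX] by blast
    have "\<forall>i. Suc i < 3 \<longrightarrow> orbit G act (\<tau> x i 1) = orbit G act (\<tau> x (Suc i) 0)"
    proof (intro allI impI)
      fix i :: nat assume "Suc i < 3"
      then have "i = 0 \<or> i = 1" by auto
      then show "orbit G act (\<tau> x i 1) = orbit G act (\<tau> x (Suc i) 0)"
        using a b by (auto simp: \<tau>_def H0 H1)
    qed
    then show ?thesis by (simp add: \<tau>_def)
  qed
  have c\<tau>: "continuous_map (subtopology X ?W) (subtopology (multipath_space G act X 3) {\<gamma>. \<gamma> 0 0 = x0}) \<tau>"
    unfolding multipath_space_def subtopology_subtopology continuous_map_in_subtopology
    using cP mem by blast
  have "homotopic_with (\<lambda>_. True) (subtopology X ?W) X ((\<lambda>\<gamma>. \<gamma> (3 - 1) 1) \<circ> \<tau>) id"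
    by (subst homotopic_with_sym, rule homotopic_with_equal)
       (auto simp: \<tau>_def continuous_map_from_subtopology continuous_map_id)
  then show ?thesis unfolding Sec_def using c\<tau> by blast
qed

lemma TC_fwd:
  assumes hs: "continuous_map (orbit_space G act X) X s"
    and sec: "\<forall>y\<in>topspace (orbit_space G act X). orbit G act (s y) = y"
    and U: "Sec (path_space (orbit_space G act X)) (prod_topology (orbit_space G act X) (orbit_space G act X))
            (\<lambda>g. (g 0, g 1)) U"
  shows "Sec (multipath_space G act X 3) (prod_topology X X) (\<lambda>\<gamma>. (\<gamma> 0 0, \<gamma> (3 - 1) 1))
           {z \<in> topspace (prod_topology X X). (orbit G act (fst z), orbit G act (snd z)) \<in> U}"
proof -
  let ?Q = "orbit_space G act X" and ?\<rho> = "orbit G act"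
  let ?W = "{z \<in> topspace (prod_topology X X). (?\<rho> (fst z), ?\<rho> (snd z)) \<in> U}"
  let ?R = "\<lambda>z. (?\<rho> (fst z), ?\<rho> (snd z))"
  let ?Z = "subtopology (prod_topology X X) ?W"
  have hU: "homotopic_with (\<lambda>_. True) (subtopology (prod_topology ?Q ?Q) U) ?Q fst snd"
    by (rule Sec_TC_imp[OF U])
  obtain H :: "real \<times> ('a set \<times> 'a set) \<Rightarrow> 'a set"
    where Hc: "continuous_map (prod_topology (top_of_set {0..1}) (subtopology (prod_topology ?Q ?Q) U)) ?Q H"
    and H0: "\<And>u. H (0,u) = fst u" and H1: "\<And>u. H (1,u) = snd u"
    using hU unfolding homotopic_with_def by auto
  have cr: "continuous_map X ?Q ?\<rho>" by (rule continuous_orbit)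
  have cR0: "continuous_map (prod_topology X X) (prod_topology ?Q ?Q) ?R"
    unfolding continuous_map_paired
    using continuous_map_compose[OF continuous_map_fst cr] continuous_map_compose[OF continuous_map_snd cr]
    by (simp add: o_def) blast
  have cR: "continuous_map ?Z (subtopology (prod_topology ?Q ?Q) U) ?R"
    by (simp add: continuous_map_in_subtopology continuous_map_from_subtopology[OF cR0] Pi_iff)
  have cM0: "continuous_map ?Z (path_space X)
      (\<lambda>z. restrict (\<lambda>t. (s \<circ> (H \<circ> (\<lambda>(t,u). (t, ?R u)))) (t, z)) {0..1})"
    by (rule exp_continuous[OF continuous_map_compose[OF continuous_map_compose[OF pair_cont[OF cR] Hc] hs]])
  have cM: "continuous_map ?Z (path_space X) (\<lambda>z. restrict (\<lambda>t. s (H (t, ?R z))) {0..1})"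
    using cM0 by (simp add: o_def)
  have cf: "continuous_map ?Z X fst"
    by (rule continuous_map_from_subtopology[OF continuous_map_fst])
  have csn: "continuous_map ?Z X snd"
    by (rule continuous_map_from_subtopology[OF continuous_map_snd])
  have cC10: "continuous_map ?Z (path_space X) (\<lambda>z. restrict (\<lambda>t. (fst \<circ> snd) (t, z)) {0..1})"
    by (rule exp_continuous[OF continuous_map_compose[OF continuous_map_snd cf]])
  then have cC1: "continuous_map ?Z (path_space X) (\<lambda>z. restrict (\<lambda>t. fst z) {0..1})"
    by simp
  have cC20: "continuous_map ?Z (path_space X) (\<lambda>z. restrict (\<lambda>t. (snd \<circ> snd) (t, z)) {0..1})"
    by (rule exp_continuous[OF continuous_map_compose[OF continuous_map_snd csn]])
  then have cC2: "continuous_map ?Z (path_space X) (\<lambda>z. restrict (\<lambda>t. snd z) {0..1})"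
    by simp
  define \<tau> where "\<tau> z = restrict (\<lambda>i::nat. if i = 0 then restrict (\<lambda>t. fst z) {0..1}
       else if i = 1 then restrict (\<lambda>t. s (H (t, ?R z))) {0..1} else restrict (\<lambda>t. snd z) {0..1}) {..<3}" for z
  have cP: "continuous_map ?Z (product_topology (\<lambda>_. path_space X) {..<3}) \<tau>"
    unfolding continuous_map_componentwise
  proof (intro conjI ballI)
    show "\<tau> ` topspace ?Z \<subseteq> extensional {..<3}"
      by (auto simp: \<tau>_def)
    fix k :: nat assume "k \<in> {..<3}"
    then have "k = 0 \<or> k = 1 \<or> k = 2" by auto
    then show "continuous_map ?Z (path_space X) (\<lambda>x. \<tau> x k)"
      using cC1 cM cC2 by (auto simp: \<tau>_def)
  qed
  have tQ: "?\<rho> x \<in> topspace ?Q" if "x \<in> topspace X" for x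
    using that by (simp add: topspace_orbit_space)
  have mem: "\<tau> z \<in> {\<gamma>. \<forall>i. Suc i < 3 \<longrightarrow> orbit G act (\<gamma> i 1) = orbit G act (\<gamma> (Suc i) 0)}"
    if z: "z \<in> topspace ?Z" for z
  proof -
    have zX: "fst z \<in> topspace X" "snd z \<in> topspace X" using z by auto
    have a: "orbit G act (s (?\<rho> (fst z))) = ?\<rho> (fst z)" using sec tQ[OF zX(1)] by blast
    have b: "orbit G act (s (?\<rho> (snd z))) = ?\<rho> (snd z)" using sec tQ[OF zX(2)] by blast
    have "\<forall>i. Suc i < 3 \<longrightarrow> orbit G act (\<tau> z i 1) = orbit G act (\<tau> z (Suc i) 0)"
    proof (intro allI impI)
      fix i :: nat assume "Suc i < 3"
      then have "i = 0 \<or> i = 1" by auto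
      then show "orbit G act (\<tau> z i 1) = orbit G act (\<tau> z (Suc i) 0)"
        using a b by (auto simp: \<tau>_def H0 H1)
    qed
    then show ?thesis by simp
  qed
  have c\<tau>: "continuous_map ?Z (multipath_space G act X 3) \<tau>"
    unfolding multipath_space_def continuous_map_in_subtopology
    using cP mem by blast
  have "homotopic_with (\<lambda>_. True) ?Z (prod_topology X X) ((\<lambda>\<gamma>. (\<gamma> 0 0, \<gamma> (3 - 1) 1)) \<circ> \<tau>) id"
    by (subst homotopic_with_sym, rule homotopic_with_equal)
       (auto simp: \<tau>_def continuous_map_from_subtopology continuous_map_id)
  then show ?thesis unfolding Sec_def using c\<tau> by blast
qed

theorem mainTheorem8:
  fixes G :: "('g, 'm) monoid_scheme" and TG :: "'g topology"
    and act :: "'g \<Rightarrow> 'a \<Rightarrow> 'a" and X :: "'a topology" and x0 :: 'a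
    and s :: "'a set \<Rightarrow> 'a"
  assumes "G_space G TG act X"
    and "x0 \<in> topspace X"
    and "continuous_map (orbit_space G act X) X s"
    and "\<forall>y\<in>topspace (orbit_space G act X). orbit G act (s y) = y"
  shows "cat_G_inf G act X x0 = LS_cat (orbit_space G act X) (orbit G act x0)
     \<and> TC_G_inf G act X = TC (orbit_space G act X)"
proof
  have hs: "continuous_map (orbit_space G act X) X s" and sec: "\<forall>y\<in>topspace (orbit_space G act X). orbit G act (s y) = y"
    and x0: "x0 \<in> topspace X" using assms by auto
  have cr: "continuous_map X (orbit_space G act X) (orbit G act)" by (rule continuous_orbit)
  show "cat_G_inf G act X x0 = LS_cat (orbit_space G act X) (orbit G act x0)"
  proof (rule antisym)
    have "cat_G_k G act X x0 3 \<le> LS_cat (orbit_space G act X) (orbit G act x0)"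
      unfolding cat_G_k_def LS_cat_def
      by (rule secat_le[OF cr cat_fwd[OF hs sec x0]])
    then show "cat_G_inf G act X x0 \<le> LS_cat (orbit_space G act X) (orbit G act x0)"
      unfolding cat_G_inf_def by (rule INF_lower2[rotated]) simp
  next
    show "LS_cat (orbit_space G act X) (orbit G act x0) \<le> cat_G_inf G act X x0"
      unfolding cat_G_inf_def
    proof (rule INF_greatest)
      fix k :: nat assume "k \<in> {1..}"
      then have k: "k \<ge> 1" by simp
      show "LS_cat (orbit_space G act X) (orbit G act x0) \<le> cat_G_k G act X x0 k"
        unfolding cat_G_k_def LS_cat_def
        by (rule secat_le[OF hs cat_rev[OF k hs sec]])
    qed
  qed
next
  have hs: "continuous_map (orbit_space G act X) X s" and sec: "\<forall>y\<in>topspace (orbit_space G act X). orbit G act (s y) = y"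
    using assms by auto
  have cr: "continuous_map X (orbit_space G act X) (orbit G act)" by (rule continuous_orbit)
  have crr: "continuous_map (prod_topology X X) (prod_topology (orbit_space G act X) (orbit_space G act X))
      (\<lambda>z. (orbit G act (fst z), orbit G act (snd z)))"
    unfolding continuous_map_paired
    using continuous_map_compose[OF continuous_map_fst cr] continuous_map_compose[OF continuous_map_snd cr]
    by (simp add: o_def) blast
  have css: "continuous_map (prod_topology (orbit_space G act X) (orbit_space G act X)) (prod_topology X X)
      (\<lambda>u. (s (fst u), s (snd u)))"
    unfolding continuous_map_paired
    using continuous_map_compose[OF continuous_map_fst hs] continuous_map_compose[OF continuous_map_snd hs]
    by (simp add: o_def) blast
  show "TC_G_inf G act X = TC (orbit_space G act X)"
  proof (rule antisym)
    have "TC_G_k G act X 3 \<le> TC (orbit_space G act X)"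
      unfolding TC_G_k_def TC_def
      by (rule secat_le[OF crr TC_fwd[OF hs sec]])
    then show "TC_G_inf G act X \<le> TC (orbit_space G act X)"
      unfolding TC_G_inf_def by (rule INF_lower2[rotated]) simp
  next
    show "TC (orbit_space G act X) \<le> TC_G_inf G act X"
      unfolding TC_G_inf_def
    proof (rule INF_greatest)
      fix k :: nat assume "k \<in> {1..}"
      then have k: "k \<ge> 1" by simp
      show "TC (orbit_space G act X) \<le> TC_G_k G act X k"
        unfolding TC_G_k_def TC_def
        by (rule secat_le[OF css TC_rev[OF k hs sec]])
    qed
  qed
qed

end
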